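(* Let $(X,d)$ be an ultrametric space such that for some $\varepsilon>0$ all balls of radius $\varepsilon$ are compact, and let $f:X\to X$ be an invertible uniformly continuous map. (i) If $f^{-1}$ is an eventually $1$-Lipschitz map, then $f$ has the shadowing property. (ii) If $f^{-1}$ is uniformly continuous and $f$ is an eventual similarity, then $f$ has the shadowing property.
   Context: An ultrametric space satisfies $d(x,z)\le\max\{d(x,y),d(y,z)\}$. A map $g$ is eventually Lipschitz $L$ if there is $\varepsilon>0$ with $d(g(x),g(y))\le L\,d(x,y)$ whenever $d(x,y)<\varepsilon$. $f$ is an eventual similarity if there are $\varepsilon>0$ and $s>0$ with $d(f(x),f(y))=s\,d(x,y)$ whenever $d(x,y)<\varepsilon$. Shadowing property: for every $\varepsilon>0$ there is $\delta>0$ such that every sequence $(x_n)_{n\in\mathbb{N}}$ with $d(f(x_n),x_{n+1})<\delta$ for all $n$ admits $x$ with $d(f^n(x),x_n)<\varepsilon$ for all $n$. *)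

theory Defs
  imports "HOL-Analysis.Analysis"
begin

definition ultrametric :: "('a::metric_space) itself \<Rightarrow> bool" where
  "ultrametric _ \<longleftrightarrow> (\<forall>x y z::'a. dist x z \<le> max (dist x y) (dist y z))"

definition eventually_lipschitz :: "('a::metric_space \<Rightarrow> 'b::metric_space) \<Rightarrow> real \<Rightarrow> bool" where
  "eventually_lipschitz g L \<longleftrightarrow>
     (\<exists>\<epsilon>>0. \<forall>x y. dist x y < \<epsilon> \<longrightarrow> dist (g x) (g y) \<le> L * dist x y)"

definition eventual_similarity :: "('a::metric_space \<Rightarrow> 'b::metric_space) \<Rightarrow> bool" where
  "eventual_similarity f \<longleftrightarrow>
     (\<exists>\<epsilon>>0. \<exists>s>0. \<forall>x y. dist x y < \<epsilon> \<longrightarrow> dist (f x) (f y) = s * dist x y)"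

definition shadowing :: "('a::metric_space \<Rightarrow> 'a) \<Rightarrow> bool" where
  "shadowing f \<longleftrightarrow>
     (\<forall>\<epsilon>>0. \<exists>\<delta>>0. \<forall>xs :: nat \<Rightarrow> 'a.
        (\<forall>n. dist (f (xs n)) (xs (Suc n)) < \<delta>) \<longrightarrow>
        (\<exists>x. \<forall>n. dist ((f ^^ n) x) (xs n) < \<epsilon>))"

end

theory Submission
  imports Defs
begin

lemma funpow_cont:
  assumes "continuous_on UNIV (f::'a::metric_space \<Rightarrow> 'a)"
  shows "continuous_on UNIV (f ^^ n)"
proof (induction n)
  case 0
  then show ?case by (simp add: continuous_on_id)
next
  case (Suc n)
  have "continuous_on UNIV (f \<circ> (f ^^ n))"
    by (rule continuous_on_compose[OF Suc]) (rule continuous_on_subset[OF assms], simp)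
  then show ?case by simp
qed

lemma funpow_inv_cancel:
  assumes "\<And>y. f (g y) = y"
  shows "(f ^^ n) ((g ^^ (n + k)) y) = (g ^^ k) y"
proof (induction n)
  case 0
  then show ?case by simp
next
  case (Suc n)
  have "(f ^^ Suc n) ((g ^^ (Suc n + k)) y) = (f ^^ n) (f (g ((g ^^ (n + k)) y)))"
  proof -
    have "(g ^^ (Suc n + k)) y = g ((g ^^ (n + k)) y)" by simp
    moreover have "(f ^^ Suc n) w = (f ^^ n) (f w)" for w by (simp add: funpow_swap1)
    ultimately show ?thesis by simp
  qed
  also have "\<dots> = (g ^^ k) y" using Suc assms by simp
  finally show ?case .
qed

lemma part1:
  fixes f g :: "'a::metric_space \<Rightarrow> 'a"
  assumes um: "\<And>x y z::'a. dist x z \<le> max (dist x y) (dist y z)"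
    and r: "r > 0" "\<And>x::'a. compact (cball x r)"
    and fg: "\<And>y. f (g y) = y" and gf: "\<And>x. g (f x) = x"
    and fc: "continuous_on UNIV f"
    and eta: "\<eta> > 0" "\<And>x y. dist x y < \<eta> \<Longrightarrow> dist (g x) (g y) \<le> dist x y"
  shows "shadowing f"
  unfolding shadowing_def
proof (intro allI impI)
  fix \<epsilon> :: real assume "\<epsilon> > 0"
  define e where "e = min (\<epsilon>/2) (min \<eta> r)"
  have e: "e > 0" "e \<le> \<epsilon>/2" "e \<le> \<eta>" "e \<le> r" using \<open>\<epsilon>>0\<close> eta r unfolding e_def by auto
  have ult: "dist a c < e" if "dist a b < e" "dist b c < e" for a b c :: 'a
    using um[where x=a and y=b and z=c] that by linarith
  show "\<exists>\<delta>>0. \<forall>xs. (\<forall>n. dist (f (xs n)) (xs (Suc n)) < \<delta>) \<longrightarrow>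
          (\<exists>x. \<forall>n. dist ((f ^^ n) x) (xs n) < \<epsilon>)"
  proof (intro exI[of _ e] conjI allI impI)
    show "e > 0" by (rule e)
    fix xs :: "nat \<Rightarrow> 'a"
    assume po: "\<forall>n. dist (f (xs n)) (xs (Suc n)) < e"
    have key: "k \<le> N \<Longrightarrow> dist ((g ^^ k) (xs N)) (xs (N - k)) < e" for k N
    proof (induction k)
      case 0
      then show ?case using e by simp
    next
      case (Suc k)
      define m where "m = N - Suc k"
      have m: "N - k = Suc m" using Suc.prems unfolding m_def by simp
      have h1: "dist ((g ^^ k) (xs N)) (xs (Suc m)) < e" using Suc m by simp
      have h2: "dist (xs (Suc m)) (f (xs m)) < e" using po by (simp add: dist_commute)
      have "dist ((g ^^ k) (xs N)) (f (xs m)) < e" by (rule ult[OF h1 h2])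
      then have "dist (g ((g ^^ k) (xs N))) (g (f (xs m))) < e"
        using eta(2) e by (meson le_less_trans less_le_trans)
      then show ?case using gf unfolding m_def by simp
    qed
    define z where "z N = (g ^^ N) (xs N)" for N
    have zn: "dist ((f ^^ n) (z N)) (xs n) < e" if "n \<le> N" for n N
    proof -
      have "(f ^^ n) (z N) = (g ^^ (N - n)) (xs N)"
        using funpow_inv_cancel[of f g n "N - n" "xs N", OF fg] that unfolding z_def by simp
      then show ?thesis using key[of "N - n" N] that by simp
    qed
    have "\<forall>N. z N \<in> cball (xs 0) r"
    proof
      fix N
      have "dist (z N) (xs 0) < e" using zn[of 0 N] by simp
      then show "z N \<in> cball (xs 0) r" using e by (simp add: dist_commute)
    qed
    then obtain l \<sigma> where \<sigma>: "strict_mono \<sigma>" "(z \<circ> \<sigma>) \<longlonglongrightarrow> l"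
      using compact_imp_seq_compact[OF r(2)[of "xs 0"]] unfolding seq_compact_def by blast
    show "\<exists>x. \<forall>n. dist ((f ^^ n) x) (xs n) < \<epsilon>"
    proof (intro exI[of _ l] allI)
      fix n
      have c: "continuous_on UNIV (f ^^ n)" by (rule funpow_cont[OF fc])
      have "(\<lambda>k. (f ^^ n) ((z \<circ> \<sigma>) k)) \<longlonglongrightarrow> (f ^^ n) l"
        using continuous_on_tendsto_compose[OF c \<sigma>(2)] by simp
      then have t: "(\<lambda>k. dist ((f ^^ n) ((z \<circ> \<sigma>) k)) (xs n)) \<longlonglongrightarrow> dist ((f ^^ n) l) (xs n)"
        by (intro tendsto_intros)
      have "\<forall>k\<ge>n. dist ((f ^^ n) ((z \<circ> \<sigma>) k)) (xs n) \<le> e"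
      proof (intro allI impI)
        fix k assume "n \<le> k"
        then have "n \<le> \<sigma> k" using seq_suble[OF \<sigma>(1), of k] by simp
        then show "dist ((f ^^ n) ((z \<circ> \<sigma>) k)) (xs n) \<le> e" using zn by (simp add: less_imp_le)
      qed
      then have "dist ((f ^^ n) l) (xs n) \<le> e" by (intro LIMSEQ_le_const2[OF t]) blast
      then show "dist ((f ^^ n) l) (xs n) < \<epsilon>" using e \<open>\<epsilon>>0\<close> by linarith
    qed
  qed
qed

lemma part2small:
  fixes f :: "'a::metric_space \<Rightarrow> 'a"
  assumes um: "\<And>x y z::'a. dist x z \<le> max (dist x y) (dist y z)"
    and e0: "e0 > 0" and s: "s \<le> 1" "s > 0"
    and sim: "\<And>x y. dist x y < e0 \<Longrightarrow> dist (f x) (f y) = s * dist x y"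
  shows "shadowing f"
  unfolding shadowing_def
proof (intro allI impI)
  fix \<epsilon> :: real assume "\<epsilon> > 0"
  define e where "e = min \<epsilon> e0"
  have e: "e > 0" "e \<le> \<epsilon>" "e \<le> e0" using \<open>\<epsilon>>0\<close> e0 unfolding e_def by auto
  show "\<exists>\<delta>>0. \<forall>xs. (\<forall>n. dist (f (xs n)) (xs (Suc n)) < \<delta>) \<longrightarrow>
          (\<exists>x. \<forall>n. dist ((f ^^ n) x) (xs n) < \<epsilon>)"
  proof (intro exI[of _ e] conjI allI impI)
    show "e > 0" by (rule e)
    fix xs :: "nat \<Rightarrow> 'a"
    assume po: "\<forall>n. dist (f (xs n)) (xs (Suc n)) < e"
    have "dist ((f ^^ n) (xs 0)) (xs n) < e" for n
    proof (induction n)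
      case 0
      then show ?case using e by simp
    next
      case (Suc n)
      have "dist (f ((f ^^ n) (xs 0))) (f (xs n)) = s * dist ((f ^^ n) (xs 0)) (xs n)"
        using sim Suc e by force
      also have "\<dots> \<le> dist ((f ^^ n) (xs 0)) (xs n)" using s
        by (intro mult_left_le_one_le) auto
      finally have a: "dist (f ((f ^^ n) (xs 0))) (f (xs n)) < e" using Suc by linarith
      have "dist (f ((f ^^ n) (xs 0))) (xs (Suc n)) < e"
        using um[where x="f ((f ^^ n) (xs 0))" and y="f (xs n)" and z="xs (Suc n)"] a po[rule_format, of n] by linarith
      then show ?case by simp
    qed
    then show "\<exists>x. \<forall>n. dist ((f ^^ n) x) (xs n) < \<epsilon>" using e by (meson less_le_trans)
  qed
qed

theorem corollary5p4:
  fixes f :: "'a::metric_space \<Rightarrow> 'a"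
  assumes "ultrametric TYPE('a)"
    and "\<exists>\<epsilon>>0. \<forall>x::'a. compact (cball x \<epsilon>)"
    and "bij f"
    and "uniformly_continuous_on UNIV f"
  shows "(eventually_lipschitz (inv f) 1 \<longrightarrow> shadowing f)
       \<and> (uniformly_continuous_on UNIV (inv f) \<and> eventual_similarity f \<longrightarrow> shadowing f)"
proof -
  have um: "\<And>x y z::'a. dist x z \<le> max (dist x y) (dist y z)"
    using assms(1) unfolding ultrametric_def by blast
  obtain r where r: "r > 0" "\<And>x::'a. compact (cball x r)" using assms(2) by blast
  have fg: "\<And>y. f (inv f y) = y" using assms(3) by (meson bij_inv_eq_iff)
  have gf: "\<And>x. inv f (f x) = x" using assms(3) by (simp add: bij_is_inj)
  have fc: "continuous_on UNIV f"
    using assms(4) uniformly_continuous_imp_continuous by blast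
  have P1: "shadowing f" if el: "eventually_lipschitz (inv f) 1"
  proof -
    obtain \<eta> where "\<eta> > 0" "\<forall>x y. dist x y < \<eta> \<longrightarrow> dist (inv f x) (inv f y) \<le> 1 * dist x y"
      using el unfolding eventually_lipschitz_def by blast
    then show ?thesis using part1[OF um r fg gf fc] by simp
  qed
  have P2: "shadowing f" if u: "uniformly_continuous_on UNIV (inv f)" and es: "eventual_similarity f"
  proof -
    obtain e0 s where es: "e0 > 0" "s > 0" "\<And>x y. dist x y < e0 \<Longrightarrow> dist (f x) (f y) = s * dist x y"
      using es unfolding eventual_similarity_def by auto
    show ?thesis
    proof (cases "s \<le> 1")
      case True
      then show ?thesis using part2small[OF um es(1) True es(2) es(3)] by blast
    next
      case False
      obtain \<eta> where \<eta>: "\<eta> > 0" "\<And>x y. dist x y < \<eta> \<Longrightarrow> dist (inv f x) (inv f y) < e0"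
        using u es(1) unfolding uniformly_continuous_on_def by (metis UNIV_I)
      have "dist (inv f x) (inv f y) \<le> dist x y" if "dist x y < \<eta>" for x y
      proof -
        have "dist x y = s * dist (inv f x) (inv f y)"
          using es(3)[OF \<eta>(2)[OF that]] fg by simp
        moreover have "dist (inv f x) (inv f y) \<le> s * dist (inv f x) (inv f y)"
          using False by (simp add: mult_le_cancel_right1)
        ultimately show ?thesis by simp
      qed
      then have "eventually_lipschitz (inv f) 1"
        unfolding eventually_lipschitz_def using \<eta>(1) by auto
      then show ?thesis by (rule P1)
    qed
  qed
  show ?thesis using P1 P2 by blast
qed

end
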